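(* Let $L>0$, $M\ge1$, $\Delta x=\Delta y=L/M$, and Cartesian cells with centers $(x_j,y_k)=(j\Delta x,k\Delta y)$, $j,k\in\{-M,\dots,M\}$. Let $H\in C^1([0,\infty))$, $V:\mathbb{R}^2\to\mathbb{R}$, and $(W_{p,q})_{p,q=-2M}^{2M}$ real numbers with $W_{-p,-q}=W_{p,q}$. Let $t\mapsto(\overline\rho_{j,k}(t))$ be a differentiable solution on $(0,\infty)$, with $\overline\rho_{j,k}(t)\ge0$, of \[ \frac{d\overline\rho_{j,k}}{dt}=-\frac{F^x_{j+\frac12,k}-F^x_{j-\frac12,k}}{\Delta x}-\frac{F^y_{j,k+\frac12}-F^y_{j,k-\frac12}}{\Delta y},\qquad j,k\in\{-M,\dots,M\}, \] where at each time: slopes are chosen so that the point values $\rho^{\rm E}_{j,k}=\overline\rho_{j,k}+\frac{\Delta x}{2}(\rho_x)_{j,k}$, $\rho^{\rm W}_{j,k}=\overline\rho_{j,k}-\frac{\Delta x}{2}(\rho_x)_{j,k}$, $\rho^{\rm N}_{j,k}=\overline\rho_{j,k}+\frac{\Delta y}{2}(\rho_y)_{j,k}$, $\rho^{\rm S}_{j,k}=\overline\rho_{j,k}-\frac{\Delta y}{2}(\rho_y)_{j,k}$ are nonnegative; $\xi_{j,k}=\Delta x\Delta y\sum_{i,l}W_{j-i,k-l}\overline\rho_{i,l}+H'(\overline\rho_{j,k})+V(x_j,y_k)$; $u_{j+\frac12,k}=-\frac{\xi_{j+1,k}-\xi_{j,k}}{\Delta x}$, $v_{j,k+\frac12}=-\frac{\xi_{j,k+1}-\xi_{j,k}}{\Delta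 y}$ with $u^\pm,v^\pm$ their positive/negative parts ($\max(\cdot,0)$, $\min(\cdot,0)$); $F^x_{j+\frac12,k}=u^+_{j+\frac12,k}\rho^{\rm E}_{j,k}+u^-_{j+\frac12,k}\rho^{\rm W}_{j+1,k}$, $F^y_{j,k+\frac12}=v^+_{j,k+\frac12}\rho^{\rm N}_{j,k}+v^-_{j,k+\frac12}\rho^{\rm S}_{j,k+1}$ at interior interfaces; and the discrete no-flux conditions $F^x_{M+\frac12,k}=F^x_{-M-\frac12,k}=F^y_{j,M+\frac12}=F^y_{j,-M-\frac12}=0$ hold. Define \[ E_\Delta(t)=\Delta x\Delta y\sum_{j,k}\Big[\tfrac12\Delta x\Delta y\sum_{i,l}W_{j-i,k-l}\overline\rho_{i,l}\overline\rho_{j,k}+H(\overline\rho_{j,k})+V(x_j,y_k)\overline\rho_{j,k}\Big], \] \[ I_\Delta(t)=\Delta x\Delta y\sum_{j=-M}^{M-1}\sum_{k=-M}^{M-1}\Big[(u_{j+\frac12,k})^2+(v_{j,k+\frac12})^2\Big]\min\big(\rho^{\rm E}_{j,k},\rho^{\rm W}_{j+1,k},\rho^{\rm N}_{j,k},\rho^{\rm S}_{j,k+1}\big). \] Then $\frac{d}{dt}E_\Delta(t)\le-I_\Delta(t)$ for all $t>0$.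
   Context: This is the two-dimensional semi-discrete finite-volume scheme with no-flux boundary conditions on $[-L,L]^2$ for $\rho_t=\nabla\cdot[\rho\nabla(H'(\rho)+V(\mathbf{x})+W*\rho)]$ with symmetric interaction potential $W$ (so $W_{p,q}\approx W(p\Delta x,q\Delta y)$ is symmetric) and $\rho_0\ge0$; $E_\Delta$ is the discrete free energy. *)

theory Defs
  imports "HOL-Analysis.Analysis"
begin

text \<open>Interface quantities at (j+1/2,k) are indexed by (j,k), at (j,k+1/2) by (j,k).\<close>

definition idx :: "nat \<Rightarrow> int set" where
  "idx M = {- int M .. int M}"

definition mesh :: "real \<Rightarrow> nat \<Rightarrow> real" where
  "mesh L M = L / real M"

definition xi :: "real \<Rightarrow> nat \<Rightarrow> (int \<Rightarrow> int \<Rightarrow> real) \<Rightarrow> (real \<Rightarrow> real) \<Rightarrow> (real \<Rightarrow> real \<Rightarrow> real)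
    \<Rightarrow> (int \<Rightarrow> int \<Rightarrow> real) \<Rightarrow> int \<Rightarrow> int \<Rightarrow> real" where
  "xi L M W H' V rho j k =
     mesh L M * mesh L M * (\<Sum>i\<in>idx M. \<Sum>l\<in>idx M. W (j - i) (k - l) * rho i l)
     + H' (rho j k) + V (real_of_int j * mesh L M) (real_of_int k * mesh L M)"

definition uvel where
  "uvel L M W H' V rho j k = - (xi L M W H' V rho (j + 1) k - xi L M W H' V rho j k) / mesh L M"

definition vvel where
  "vvel L M W H' V rho j k = - (xi L M W H' V rho j (k + 1) - xi L M W H' V rho j k) / mesh L M"

definition rhoE :: "real \<Rightarrow> nat \<Rightarrow> (int \<Rightarrow> int \<Rightarrow> real) \<Rightarrow> (int \<Rightarrow> int \<Rightarrow> real) \<Rightarrow> int \<Rightarrow> int \<Rightarrow> real" where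
  "rhoE L M rho rx j k = rho j k + mesh L M / 2 * rx j k"
definition rhoW :: "real \<Rightarrow> nat \<Rightarrow> (int \<Rightarrow> int \<Rightarrow> real) \<Rightarrow> (int \<Rightarrow> int \<Rightarrow> real) \<Rightarrow> int \<Rightarrow> int \<Rightarrow> real" where
  "rhoW L M rho rx j k = rho j k - mesh L M / 2 * rx j k"
definition rhoN :: "real \<Rightarrow> nat \<Rightarrow> (int \<Rightarrow> int \<Rightarrow> real) \<Rightarrow> (int \<Rightarrow> int \<Rightarrow> real) \<Rightarrow> int \<Rightarrow> int \<Rightarrow> real" where
  "rhoN L M rho ry j k = rho j k + mesh L M / 2 * ry j k"
definition rhoS :: "real \<Rightarrow> nat \<Rightarrow> (int \<Rightarrow> int \<Rightarrow> real) \<Rightarrow> (int \<Rightarrow> int \<Rightarrow> real) \<Rightarrow> int \<Rightarrow> int \<Rightarrow> real" where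
  "rhoS L M rho ry j k = rho j k - mesh L M / 2 * ry j k"

definition Fx where
  "Fx L M W H' V rho rx j k =
     (if - int M \<le> j \<and> j \<le> int M - 1 then
        max (uvel L M W H' V rho j k) 0 * rhoE L M rho rx j k
        + min (uvel L M W H' V rho j k) 0 * rhoW L M rho rx (j + 1) k
      else 0)"

definition Fy where
  "Fy L M W H' V rho ry j k =
     (if - int M \<le> k \<and> k \<le> int M - 1 then
        max (vvel L M W H' V rho j k) 0 * rhoN L M rho ry j k
        + min (vvel L M W H' V rho j k) 0 * rhoS L M rho ry j (k + 1)
      else 0)"

definition rhs where
  "rhs L M W H' V rho rx ry j k =
     - (Fx L M W H' V rho rx j k - Fx L M W H' V rho rx (j - 1) k) / mesh L M
     - (Fy L M W H' V rho ry j k - Fy L M W H' V rho ry j (k - 1)) / mesh L M"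

definition Edisc where
  "Edisc L M W H V rho =
     mesh L M * mesh L M * (\<Sum>j\<in>idx M. \<Sum>k\<in>idx M.
        (1/2) * mesh L M * mesh L M * (\<Sum>i\<in>idx M. \<Sum>l\<in>idx M. W (j - i) (k - l) * rho i l * rho j k)
        + H (rho j k) + V (real_of_int j * mesh L M) (real_of_int k * mesh L M) * rho j k)"

definition Idisc where
  "Idisc L M W H' V rho rx ry =
     mesh L M * mesh L M * (\<Sum>j\<in>{- int M .. int M - 1}. \<Sum>k\<in>{- int M .. int M - 1}.
        ((uvel L M W H' V rho j k)\<^sup>2 + (vvel L M W H' V rho j k)\<^sup>2) *
        Min {rhoE L M rho rx j k, rhoW L M rho rx (j + 1) k, rhoN L M rho ry j k, rhoS L M rho ry j (k + 1)})"

end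

theory Submission
  imports Defs
begin


lemma sbp:
  fixes F g :: "int \<Rightarrow> real"
  assumes F1: "F (int M) = 0" and F2: "F (- int M - 1) = 0"
  shows "(\<Sum>j\<in>{- int M..int M}. g j * (F j - F (j - 1)))
       = - (\<Sum>j\<in>{- int M..int M - 1}. F j * (g (j + 1) - g j))"
proof -
  have e1: "{- int M..int M} = insert (int M) {- int M..int M - 1}" by auto
  have e2: "{- int M - 1..int M - 1} = insert (- int M - 1) {- int M..int M - 1}" by auto
  have a: "(\<Sum>j\<in>{- int M..int M}. g j * F j) = (\<Sum>j\<in>{- int M..int M - 1}. g j * F j)"
    unfolding e1 using F1 by (subst sum.insert) auto
  have "(\<Sum>j\<in>{- int M..int M}. g j * F (j - 1)) = (\<Sum>j\<in>(\<lambda>j. j + 1) ` {- int M - 1..int M - 1}. g j * F (j - 1))"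
    by (rule sum.cong) (auto simp: image_iff intro!: bexI[where x="_ - 1"])
  also have "\<dots> = (\<Sum>j\<in>{- int M - 1..int M - 1}. g (j + 1) * F j)"
    by (subst sum.reindex) (auto simp: inj_on_def)
  also have "\<dots> = (\<Sum>j\<in>{- int M..int M - 1}. g (j + 1) * F j)"
    unfolding e2 using F2 by (subst sum.insert) auto
  finally have b: "(\<Sum>j\<in>{- int M..int M}. g j * F (j - 1)) = (\<Sum>j\<in>{- int M..int M - 1}. g (j + 1) * F j)" .
  have c: "(\<Sum>j\<in>{- int M..int M}. g j * (F j - F (j - 1)))
      = (\<Sum>j\<in>{- int M..int M}. g j * F j) - (\<Sum>j\<in>{- int M..int M}. g j * F (j - 1))"
    by (simp add: right_diff_distrib sum_subtractf)
  have d: "(\<Sum>j\<in>{- int M..int M - 1}. F j * (g (j + 1) - g j))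
      = (\<Sum>j\<in>{- int M..int M - 1}. g (j + 1) * F j) - (\<Sum>j\<in>{- int M..int M - 1}. g j * F j)"
    by (simp add: right_diff_distrib sum_subtractf mult.commute)
  show ?thesis by (simp only: c d a b)
qed

lemma swap_mid:
  "(\<Sum>j\<in>A. \<Sum>k\<in>B. \<Sum>i\<in>C. \<Sum>l\<in>D. f j k i l) = (\<Sum>j\<in>A. \<Sum>i\<in>C. \<Sum>k\<in>B. \<Sum>l\<in>D. f j k i l)"
  by (rule sum.cong[OF refl], rule sum.swap)

lemma swap4:
  fixes w :: "int \<Rightarrow> int \<Rightarrow> real"
  assumes sym: "\<And>j k i l. j \<in> A \<Longrightarrow> k \<in> A \<Longrightarrow> i \<in> A \<Longrightarrow> l \<in> A \<Longrightarrow> w (i - j) (l - k) = w (j - i) (k - l)"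
  shows "(\<Sum>j\<in>A. \<Sum>k\<in>A. \<Sum>i\<in>A. \<Sum>l\<in>A. w (j - i) (k - l) * x i l * y j k)
       = (\<Sum>j\<in>A. \<Sum>k\<in>A. \<Sum>i\<in>A. \<Sum>l\<in>A. w (j - i) (k - l) * x j k * y i l)"
proof -
  have "(\<Sum>j\<in>A. \<Sum>k\<in>A. \<Sum>i\<in>A. \<Sum>l\<in>A. w (j - i) (k - l) * x j k * y i l)
      = (\<Sum>j\<in>A. \<Sum>i\<in>A. \<Sum>k\<in>A. \<Sum>l\<in>A. w (j - i) (k - l) * x j k * y i l)"
    by (rule swap_mid)
  also have "\<dots> = (\<Sum>i\<in>A. \<Sum>j\<in>A. \<Sum>k\<in>A. \<Sum>l\<in>A. w (j - i) (k - l) * x j k * y i l)"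
    by (rule sum.swap)
  also have "\<dots> = (\<Sum>i\<in>A. \<Sum>j\<in>A. \<Sum>l\<in>A. \<Sum>k\<in>A. w (j - i) (k - l) * x j k * y i l)"
    by (intro sum.cong refl sum.swap)
  also have "\<dots> = (\<Sum>i\<in>A. \<Sum>j\<in>A. \<Sum>l\<in>A. \<Sum>k\<in>A. w (i - j) (l - k) * x j k * y i l)"
    by (intro sum.cong refl) (simp add: sym)
  also have "\<dots> = (\<Sum>i\<in>A. \<Sum>l\<in>A. \<Sum>j\<in>A. \<Sum>k\<in>A. w (i - j) (l - k) * x j k * y i l)"
    by (rule swap_mid)
  finally show ?thesis by simp
qed

lemma flux_bound:
  fixes u E Wv m :: real
  assumes "m \<le> E" "m \<le> Wv"
  shows "u\<^sup>2 * m \<le> (max u 0 * E + min u 0 * Wv) * u"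
proof (cases "u \<ge> 0")
  case True
  then have "(max u 0 * E + min u 0 * Wv) * u = u\<^sup>2 * E" by (simp add: power2_eq_square)
  then show ?thesis using assms(1) by (simp add: mult_left_mono)
next
  case False
  then have "(max u 0 * E + min u 0 * Wv) * u = u\<^sup>2 * Wv" by (simp add: power2_eq_square)
  then show ?thesis using assms(2) by (simp add: mult_left_mono)
qed

lemma flux_nonneg:
  fixes u E Wv :: real
  assumes "0 \<le> E" "0 \<le> Wv"
  shows "0 \<le> (max u 0 * E + min u 0 * Wv) * u"
  using flux_bound[of "min E Wv" E Wv u] assms by (smt (verit) zero_le_power2 mult_nonneg_nonneg)


theorem theorem2p4:
  fixes L :: real and M :: nat
    and H H' :: "real \<Rightarrow> real" and V :: "real \<Rightarrow> real \<Rightarrow> real" and W :: "int \<Rightarrow> int \<Rightarrow> real"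
    and rho rx ry :: "real \<Rightarrow> int \<Rightarrow> int \<Rightarrow> real"
  assumes L_pos: "L > 0" and M_ge: "M \<ge> 1"
    and H_deriv: "\<And>r. r \<ge> 0 \<Longrightarrow> (H has_real_derivative H' r) (at r within {0..})"
    and H'_cont: "continuous_on {0..} H'"
    and W_sym: "\<And>p q. p \<in> {- 2 * int M .. 2 * int M} \<Longrightarrow> q \<in> {- 2 * int M .. 2 * int M}
                  \<Longrightarrow> W (- p) (- q) = W p q"
    and rho_nonneg: "\<And>t j k. t > 0 \<Longrightarrow> j \<in> idx M \<Longrightarrow> k \<in> idx M \<Longrightarrow> rho t j k \<ge> 0"
    and E_nonneg: "\<And>t j k. t > 0 \<Longrightarrow> j \<in> idx M \<Longrightarrow> k \<in> idx M \<Longrightarrow> rhoE L M (rho t) (rx t) j k \<ge> 0"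
    and W_nonneg: "\<And>t j k. t > 0 \<Longrightarrow> j \<in> idx M \<Longrightarrow> k \<in> idx M \<Longrightarrow> rhoW L M (rho t) (rx t) j k \<ge> 0"
    and N_nonneg: "\<And>t j k. t > 0 \<Longrightarrow> j \<in> idx M \<Longrightarrow> k \<in> idx M \<Longrightarrow> rhoN L M (rho t) (ry t) j k \<ge> 0"
    and S_nonneg: "\<And>t j k. t > 0 \<Longrightarrow> j \<in> idx M \<Longrightarrow> k \<in> idx M \<Longrightarrow> rhoS L M (rho t) (ry t) j k \<ge> 0"
    and ode: "\<And>t j k. t > 0 \<Longrightarrow> j \<in> idx M \<Longrightarrow> k \<in> idx M \<Longrightarrow>
               ((\<lambda>s. rho s j k) has_real_derivative rhs L M W H' V (rho t) (rx t) (ry t) j k) (at t)"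
    and t_pos: "t > 0"
  shows "\<exists>D. ((\<lambda>s. Edisc L M W H V (rho s)) has_real_derivative D) (at t)
             \<and> D \<le> - Idisc L M W H' V (rho t) (rx t) (ry t)"
proof -
  define h where "h = mesh L M"
  have hpos: "h > 0" using L_pos M_ge by (simp add: h_def mesh_def)
  define r where "r = rho t"
  define d where "d j k = rhs L M W H' V (rho t) (rx t) (ry t) j k" for j k
  define A where "A = idx M"
  have finA: "finite A" by (simp add: A_def idx_def)
  have rd: "\<And>j k. j \<in> A \<Longrightarrow> k \<in> A \<Longrightarrow> ((\<lambda>s. rho s j k) has_real_derivative d j k) (at t)"
    unfolding d_def A_def by (rule ode[OF t_pos])
  have Hd: "((\<lambda>s. H (rho s j k)) has_real_derivative H' (r j k) * d j k) (at t)"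
    if jk: "j \<in> A" "k \<in> A" for j k
  proof -
    have g: "((\<lambda>s. rho s j k) has_real_derivative d j k) (at t within {0<..})"
      using rd[OF jk] by (rule has_field_derivative_at_within)
    have "(H has_real_derivative H' (r j k)) (at (rho t j k) within ((\<lambda>s. rho s j k) ` {0<..}))"
      unfolding r_def
      apply (rule DERIV_subset[OF H_deriv])
      subgoal using rho_nonneg[OF t_pos, of j k] jk unfolding A_def by blast
      subgoal using jk unfolding A_def image_subset_iff by (auto intro: rho_nonneg)
      done
    from DERIV_image_chain[OF this g]
    have "((\<lambda>s. H (rho s j k)) has_real_derivative H' (r j k) * d j k) (at t within {0<..})"
      by (simp add: o_def r_def)
    moreover have eq: "at t within {0<..} = at t"
      by (rule at_within_open) (use t_pos in auto)
    ultimately show ?thesis by simp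
  qed
  define D0 where "D0 = h * h * (\<Sum>j\<in>A. \<Sum>k\<in>A. 1/2 * h * h *
      (\<Sum>i\<in>A. \<Sum>l\<in>A. W (j - i) (k - l) * (d i l * r j k + r i l * d j k))
      + H' (r j k) * d j k + V (real_of_int j * h) (real_of_int k * h) * d j k)"
  have derE: "((\<lambda>s. Edisc L M W H V (rho s)) has_real_derivative D0) (at t)"
    unfolding Edisc_def D0_def h_def[symmetric] A_def[symmetric]
    apply (rule DERIV_cmult)
    apply (rule DERIV_sum)
    apply (rule DERIV_sum)
    apply (rule DERIV_add)
    apply (rule DERIV_add)
    apply (rule DERIV_cmult)
    apply (rule DERIV_sum)
    apply (rule DERIV_sum)
    subgoal for j k i l using rd[of i l] rd[of j k]
      by (auto intro!: derivative_eq_intros simp: r_def algebra_simps)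
    subgoal for j k using Hd by simp
    subgoal for j k using rd[of j k]
      by (auto intro!: derivative_eq_intros)
    done
  define \<xi> where "\<xi> j k = xi L M W H' V r j k" for j k
  define u where "u j k = uvel L M W H' V r j k" for j k
  define v where "v j k = vvel L M W H' V r j k" for j k
  define fx where "fx j k = Fx L M W H' V r (rx t) j k" for j k
  define fy where "fy j k = Fy L M W H' V r (ry t) j k" for j k
  define J where "J = {- int M .. int M - 1}"
  have finJ: "finite J" by (simp add: J_def)
  have JA: "J \<subseteq> A" by (auto simp: J_def A_def idx_def)
  define S1 where "S1 = (\<Sum>j\<in>A. \<Sum>k\<in>A. \<Sum>i\<in>A. \<Sum>l\<in>A. W (j - i) (k - l) * d i l * r j k)"
  define S2 where "S2 = (\<Sum>j\<in>A. \<Sum>k\<in>A. \<Sum>i\<in>A. \<Sum>l\<in>A. W (j - i) (k - l) * d j k * r i l)"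
  have S12: "S1 = S2" unfolding S1_def S2_def
  proof (rule swap4)
    fix j k i l assume "j \<in> A" "k \<in> A" "i \<in> A" "l \<in> A"
    then have "j - i \<in> {- 2 * int M .. 2 * int M}" "k - l \<in> {- 2 * int M .. 2 * int M}"
      by (auto simp: A_def idx_def)
    from W_sym[OF this] show "W (i - j) (l - k) = W (j - i) (k - l)" by simp
  qed
  define SH where "SH = (\<Sum>j\<in>A. \<Sum>k\<in>A. H' (r j k) * d j k)"
  define SV where "SV = (\<Sum>j\<in>A. \<Sum>k\<in>A. V (real_of_int j * h) (real_of_int k * h) * d j k)"
  have pt: "1/2 * h * h * (\<Sum>i\<in>A. \<Sum>l\<in>A. W (j - i) (k - l) * (d i l * r j k + r i l * d j k))
      + H' (r j k) * d j k + V (real_of_int j * h) (real_of_int k * h) * d j k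
    = 1/2 * h * h * (\<Sum>i\<in>A. \<Sum>l\<in>A. W (j - i) (k - l) * d i l * r j k)
      + 1/2 * h * h * (\<Sum>i\<in>A. \<Sum>l\<in>A. W (j - i) (k - l) * d j k * r i l)
      + H' (r j k) * d j k + V (real_of_int j * h) (real_of_int k * h) * d j k" for j k
  proof -
    have "(\<Sum>i\<in>A. \<Sum>l\<in>A. W (j - i) (k - l) * (d i l * r j k + r i l * d j k))
       = (\<Sum>i\<in>A. \<Sum>l\<in>A. W (j - i) (k - l) * d i l * r j k)
         + (\<Sum>i\<in>A. \<Sum>l\<in>A. W (j - i) (k - l) * d j k * r i l)"
      by (simp only: sum.distrib[symmetric]) (intro sum.cong refl, simp add: algebra_simps)
    then show ?thesis by (simp add: distrib_left)
  qed
  have D0a: "D0 = h * h * (1/2 * h * h * S1 + 1/2 * h * h * S2 + SH + SV)"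
    unfolding D0_def pt S1_def S2_def SH_def SV_def
    by (simp only: sum.distrib sum_distrib_left)
  have pt2: "\<xi> j k * d j k = h * h * (\<Sum>i\<in>A. \<Sum>l\<in>A. W (j - i) (k - l) * d j k * r i l)
      + H' (r j k) * d j k + V (real_of_int j * h) (real_of_int k * h) * d j k" for j k
  proof -
    have "(\<Sum>i\<in>A. \<Sum>l\<in>A. W (j - i) (k - l) * r i l) * d j k
        = (\<Sum>i\<in>A. \<Sum>l\<in>A. W (j - i) (k - l) * d j k * r i l)"
      by (simp only: sum_distrib_right) (intro sum.cong refl, simp add: algebra_simps)
    then show ?thesis
      unfolding \<xi>_def xi_def h_def[symmetric] A_def[symmetric]
      by (simp add: distrib_right mult.assoc)
  qed
  have D0b: "h * h * (\<Sum>j\<in>A. \<Sum>k\<in>A. \<xi> j k * d j k) = h * h * (h * h * S2 + SH + SV)"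
    unfolding pt2 S2_def SH_def SV_def
    by (simp only: sum.distrib sum_distrib_left)
  have D0c: "D0 = h * h * (\<Sum>j\<in>A. \<Sum>k\<in>A. \<xi> j k * d j k)"
    using D0a D0b S12 by (simp add: algebra_simps)
  have hne: "h \<noteq> 0" using hpos by simp
  have Aeq: "A = {- int M..int M}" by (simp add: A_def idx_def)
  have xi_u: "\<xi> (j + 1) k - \<xi> j k = - h * u j k" for j k
    using hne by (simp add: \<xi>_def u_def uvel_def h_def[symmetric] field_simps)
  have xi_v: "\<xi> j (k + 1) - \<xi> j k = - h * v j k" for j k
    using hne by (simp add: \<xi>_def v_def vvel_def h_def[symmetric] field_simps)
  have xpart: "(\<Sum>j\<in>A. \<xi> j k * (fx j k - fx (j - 1) k)) = h * (\<Sum>j\<in>J. fx j k * u j k)" for k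
  proof -
    have "(\<Sum>j\<in>A. \<xi> j k * (fx j k - fx (j - 1) k))
        = - (\<Sum>j\<in>J. fx j k * (\<xi> (j + 1) k - \<xi> j k))"
      unfolding Aeq J_def by (rule sbp) (simp_all add: fx_def Fx_def)
    also have "\<dots> = h * (\<Sum>j\<in>J. fx j k * u j k)"
      unfolding xi_u by (simp add: sum_distrib_left sum_negf[symmetric] algebra_simps)
    finally show ?thesis .
  qed
  have ypart: "(\<Sum>k\<in>A. \<xi> j k * (fy j k - fy j (k - 1))) = h * (\<Sum>k\<in>J. fy j k * v j k)" for j
  proof -
    have "(\<Sum>k\<in>A. \<xi> j k * (fy j k - fy j (k - 1)))
        = - (\<Sum>k\<in>J. fy j k * (\<xi> j (k + 1) - \<xi> j k))"
      unfolding Aeq J_def by (rule sbp) (simp_all add: fy_def Fy_def)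
    also have "\<dots> = h * (\<Sum>k\<in>J. fy j k * v j k)"
      unfolding xi_v by (simp add: sum_distrib_left sum_negf[symmetric] algebra_simps)
    finally show ?thesis .
  qed
  have dform: "d j k = - (fx j k - fx (j - 1) k) / h - (fy j k - fy j (k - 1)) / h" for j k
    by (simp add: d_def rhs_def fx_def fy_def h_def r_def)
  define X where "X = (\<Sum>k\<in>A. \<Sum>j\<in>J. fx j k * u j k)"
  define Y where "Y = (\<Sum>j\<in>A. \<Sum>k\<in>J. fy j k * v j k)"
  define Px where "Px = (\<Sum>j\<in>A. \<Sum>k\<in>A. \<xi> j k * (fx j k - fx (j - 1) k))"
  define Py where "Py = (\<Sum>j\<in>A. \<Sum>k\<in>A. \<xi> j k * (fy j k - fy j (k - 1)))"
  have "(\<Sum>j\<in>A. \<Sum>k\<in>A. \<xi> j k * d j k)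
      = (\<Sum>j\<in>A. \<Sum>k\<in>A. - (1 / h) * (\<xi> j k * (fx j k - fx (j - 1) k))
          - (1 / h) * (\<xi> j k * (fy j k - fy j (k - 1))))"
    by (intro sum.cong refl) (simp add: dform diff_divide_distrib right_diff_distrib algebra_simps)
  also have "\<dots> = (\<Sum>j\<in>A. \<Sum>k\<in>A. - (1 / h) * (\<xi> j k * (fx j k - fx (j - 1) k)))
          - (\<Sum>j\<in>A. \<Sum>k\<in>A. (1 / h) * (\<xi> j k * (fy j k - fy j (k - 1))))"
    by (simp only: sum_subtractf)
  also have "\<dots> = - (1 / h) * Px - (1 / h) * Py"
    unfolding Px_def Py_def by (simp only: sum_distrib_left)
  finally have e1: "(\<Sum>j\<in>A. \<Sum>k\<in>A. \<xi> j k * d j k) = - (1 / h) * Px - (1 / h) * Py" .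
  have "Px = (\<Sum>k\<in>A. \<Sum>j\<in>A. \<xi> j k * (fx j k - fx (j - 1) k))"
    unfolding Px_def by (rule sum.swap)
  also have "\<dots> = (\<Sum>k\<in>A. h * (\<Sum>j\<in>J. fx j k * u j k))"
    by (simp only: xpart)
  also have "\<dots> = h * X" unfolding X_def by (simp only: sum_distrib_left)
  finally have e2: "Px = h * X" .
  have "Py = (\<Sum>j\<in>A. h * (\<Sum>k\<in>J. fy j k * v j k))"
    unfolding Py_def by (simp only: ypart)
  also have "\<dots> = h * Y" unfolding Y_def by (simp only: sum_distrib_left)
  finally have e3: "Py = h * Y" .
  have main: "(\<Sum>j\<in>A. \<Sum>k\<in>A. \<xi> j k * d j k) = - X - Y"
    unfolding e1 e2 e3 using hne by (simp add: algebra_simps)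
  define m where "m j k = Min {rhoE L M r (rx t) j k, rhoW L M r (rx t) (j + 1) k,
     rhoN L M r (ry t) j k, rhoS L M r (ry t) j (k + 1)}" for j k
  have mle: "m j k \<le> rhoE L M r (rx t) j k" "m j k \<le> rhoW L M r (rx t) (j + 1) k"
     "m j k \<le> rhoN L M r (ry t) j k" "m j k \<le> rhoS L M r (ry t) j (k + 1)" for j k
    unfolding m_def by (auto intro: Min_le)
  have Iform: "Idisc L M W H' V (rho t) (rx t) (ry t)
      = h * h * ((\<Sum>j\<in>J. \<Sum>k\<in>J. (u j k)\<^sup>2 * m j k) + (\<Sum>j\<in>J. \<Sum>k\<in>J. (v j k)\<^sup>2 * m j k))"
    unfolding Idisc_def h_def[symmetric] r_def[symmetric] J_def[symmetric]
      u_def[symmetric] v_def[symmetric] m_def[symmetric]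
    by (simp only: sum.distrib[symmetric] distrib_right)
  have fxJ: "fx j k = max (u j k) 0 * rhoE L M r (rx t) j k + min (u j k) 0 * rhoW L M r (rx t) (j + 1) k"
    if "j \<in> J" for j k
    using that by (simp add: fx_def Fx_def u_def J_def)
  have fyJ: "fy j k = max (v j k) 0 * rhoN L M r (ry t) j k + min (v j k) 0 * rhoS L M r (ry t) j (k + 1)"
    if "k \<in> J" for j k
    using that by (simp add: fy_def Fy_def v_def J_def)
  have inA: "j \<in> J \<Longrightarrow> j \<in> idx M" "j \<in> J \<Longrightarrow> j + 1 \<in> idx M" for j
    by (auto simp: J_def idx_def)
  have Xb: "(\<Sum>j\<in>J. \<Sum>k\<in>J. (u j k)\<^sup>2 * m j k) \<le> X"
  proof -
    have "(\<Sum>j\<in>J. \<Sum>k\<in>J. (u j k)\<^sup>2 * m j k) \<le> (\<Sum>j\<in>J. \<Sum>k\<in>J. fx j k * u j k)"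
      by (intro sum_mono) (simp add: fxJ flux_bound mle)
    also have "\<dots> \<le> (\<Sum>j\<in>J. \<Sum>k\<in>A. fx j k * u j k)"
    proof (intro sum_mono sum_mono2 finA JA)
      fix j k assume j: "j \<in> J" and k: "k \<in> A - J"
      then have kA: "k \<in> idx M" by (simp add: A_def)
      show "0 \<le> fx j k * u j k" unfolding fxJ[OF j] r_def
        by (rule flux_nonneg) (use E_nonneg[OF t_pos inA(1)[OF j] kA] W_nonneg[OF t_pos inA(2)[OF j] kA] in auto)
    qed
    also have "\<dots> = X" unfolding X_def by (rule sum.swap)
    finally show ?thesis .
  qed
  have Yb: "(\<Sum>j\<in>J. \<Sum>k\<in>J. (v j k)\<^sup>2 * m j k) \<le> Y"
  proof -
    have "(\<Sum>j\<in>J. \<Sum>k\<in>J. (v j k)\<^sup>2 * m j k) \<le> (\<Sum>j\<in>J. \<Sum>k\<in>J. fy j k * v j k)"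
      by (intro sum_mono) (simp add: fyJ flux_bound mle)
    also have "\<dots> \<le> Y" unfolding Y_def
    proof (intro sum_mono2 finA JA)
      fix j assume j: "j \<in> A - J"
      then have jA: "j \<in> idx M" by (simp add: A_def)
      show "0 \<le> (\<Sum>k\<in>J. fy j k * v j k)"
      proof (rule sum_nonneg)
        fix k assume k: "k \<in> J"
        show "0 \<le> fy j k * v j k" unfolding fyJ[OF k] r_def
          by (rule flux_nonneg) (use N_nonneg[OF t_pos jA inA(1)[OF k]] S_nonneg[OF t_pos jA inA(2)[OF k]] in auto)
      qed
    qed
    finally show ?thesis .
  qed
  have "D0 = h * h * (- X - Y)" using D0c main by simp
  also have "\<dots> \<le> - Idisc L M W H' V (rho t) (rx t) (ry t)"
  proof -
    have "h * h * ((\<Sum>j\<in>J. \<Sum>k\<in>J. (u j k)\<^sup>2 * m j k) + (\<Sum>j\<in>J. \<Sum>k\<in>J. (v j k)\<^sup>2 * m j k))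
        \<le> h * h * (X + Y)"
      by (rule mult_left_mono) (use Xb Yb hpos in auto)
    then show ?thesis unfolding Iform by (simp add: algebra_simps)
  qed
  finally show ?thesis using derE by blast
qed

end
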